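(* Let $\psi\in\Psi$ satisfy $\limsup_{t\to\infty}\frac{\psi(2t)}{\psi(t)}<2$ and let $\tau_\omega$ be a Dixmier trace on $m_\psi$. Then for every positive $x=\{x_k\}\in m_\psi$, $$\tau_\omega(x)=\omega\Big(\Big\{\frac1{\psi(n)}\sum_{k:\ x_k\ge\psi(n)/n}x_k\Big\}_n\Big).$$
   Context: $\Psi$ is the class of concave increasing functions $\psi$ on $[0,\infty)$ with $\psi(\infty)=\infty$, $\psi(t)=O(t)$ as $t\to0$, $\psi(t)=o(t)$ as $t\to\infty$. $m_\psi$ is the space of sequences $x$ with $\sup_n\frac1{\psi(n)}\sum_{k=1}^nx_k^*<\infty$, where $\{x_k^*\}$ is $\{|x_k|\}$ rearranged nonincreasingly. For $n\ge1$, $\sigma_n(x_1,x_2,\dots)=(x_1,\dots,x_1,x_2,\dots,x_2,\dots)$ (each entry $n$ times). A dilation invariant generalised limit on $l_\infty$ is a positive linear $\omega$ with $\omega(1)=1$, $\omega|_{c_0}=0$, $\omega\circ\sigma_n=\omega$ for all $n$. For such $\omega$ put $\tau_\omega(x)=\omega(\{\frac1{\psi(N)}\sum_{k=1}^Nx_k^*\}_N)$ for $0\le x\in m_\psi$; if this is additive on the positive cone, $\tau_\omega$ is called a Dixmier trace on $m_\psi$. *)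

theory Defs
  imports "HOL-Analysis.Analysis" "HOL-Library.Landau_Symbols"
begin

(* Sequences are 0-based: x k stands for the paper's x_{k+1}. *)

definition Psi_class :: "(real \<Rightarrow> real) \<Rightarrow> bool" where
  "Psi_class \<psi> \<longleftrightarrow>
     concave_on {0..} \<psi> \<and> mono_on {0..} \<psi> \<and>
     filterlim \<psi> at_top at_top \<and>
     \<psi> \<in> O[at_right 0](\<lambda>t. t) \<and>
     \<psi> \<in> o[at_top](\<lambda>t. t)"

(* nonincreasing rearrangement of |x|: decr x k = x^*_{k+1} *)
definition decr :: "(nat \<Rightarrow> real) \<Rightarrow> nat \<Rightarrow> real" where
  "decr x k = Inf {s. 0 \<le> s \<and> finite {j. s < \<bar>x j\<bar>} \<and> card {j. s < \<bar>x j\<bar>} \<le> k}"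

(* (1/psi(N)) * sum_{k=1}^N x^*_k, as a 0-based sequence in N-1 *)
definition avg_seq :: "(real \<Rightarrow> real) \<Rightarrow> (nat \<Rightarrow> real) \<Rightarrow> nat \<Rightarrow> real" where
  "avg_seq \<psi> x k = (1 / \<psi> (real (Suc k))) * (\<Sum>i\<le>k. decr x i)"

definition m_psi :: "(real \<Rightarrow> real) \<Rightarrow> (nat \<Rightarrow> real) set" where
  "m_psi \<psi> = {x. Bseq x \<and> bdd_above (range (avg_seq \<psi> x))}"

(* dilation: (sigma_n x)_j = x_{ceil(j/n)} in 1-based indexing *)
definition sigma :: "nat \<Rightarrow> (nat \<Rightarrow> real) \<Rightarrow> nat \<Rightarrow> real" where
  "sigma n x k = x (k div n)"

definition dil_inv_gen_limit :: "((nat \<Rightarrow> real) \<Rightarrow> real) \<Rightarrow> bool" where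
  "dil_inv_gen_limit \<omega> \<longleftrightarrow>
     (\<forall>x y a b. Bseq x \<longrightarrow> Bseq y \<longrightarrow> \<omega> (\<lambda>k. a * x k + b * y k) = a * \<omega> x + b * \<omega> y) \<and>
     (\<forall>x. Bseq x \<longrightarrow> (\<forall>k. 0 \<le> x k) \<longrightarrow> 0 \<le> \<omega> x) \<and>
     \<omega> (\<lambda>_. 1) = 1 \<and>
     (\<forall>x. x \<longlonglongrightarrow> 0 \<longrightarrow> \<omega> x = 0) \<and>
     (\<forall>n x. 1 \<le> n \<longrightarrow> Bseq x \<longrightarrow> \<omega> (sigma n x) = \<omega> x)"

definition tau :: "(real \<Rightarrow> real) \<Rightarrow> ((nat \<Rightarrow> real) \<Rightarrow> real) \<Rightarrow> (nat \<Rightarrow> real) \<Rightarrow> real" where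
  "tau \<psi> \<omega> x = \<omega> (avg_seq \<psi> x)"

definition is_dixmier_trace :: "(real \<Rightarrow> real) \<Rightarrow> ((nat \<Rightarrow> real) \<Rightarrow> real) \<Rightarrow> bool" where
  "is_dixmier_trace \<psi> \<omega> \<longleftrightarrow>
     (\<forall>x y. x \<in> m_psi \<psi> \<longrightarrow> y \<in> m_psi \<psi> \<longrightarrow> (\<forall>k. 0 \<le> x k) \<longrightarrow> (\<forall>k. 0 \<le> y k) \<longrightarrow>
        tau \<psi> \<omega> (\<lambda>k. x k + y k) = tau \<psi> \<omega> x + tau \<psi> \<omega> y)"

end

theory Submission
  imports Defs
begin


locale psi_loc =
  fixes \<psi> :: "real \<Rightarrow> real"
  assumes Psi: "Psi_class \<psi>"
begin

lemma conc: "concave_on {0..} \<psi>" and mon: "mono_on {0..} \<psi>"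
  and lim: "filterlim \<psi> at_top at_top" and bo: "\<psi> \<in> O[at_right 0](\<lambda>t. t)"
  and so: "\<psi> \<in> o[at_top](\<lambda>t. t)"
  using Psi unfolding Psi_class_def by auto

lemma ratio:
  assumes "0 < a" "a \<le> t" shows "a * \<psi> t \<le> t * \<psi> a"
proof (cases "a = t")
  case True then show ?thesis by simp
next
  case False hence at: "a < t" using assms by simp
  from bo obtain c where c: "c > 0" "eventually (\<lambda>e. norm (\<psi> e) \<le> c * norm e) (at_right 0)"
    by (elim landau_o.bigE)
  have ev1: "eventually (\<lambda>e. e < a) (at_right (0::real))"
    using eventually_at_right_real[OF assms(1)] by (rule eventually_mono) auto
  have ev2: "eventually (\<lambda>e::real. 0 < e) (at_right 0)"
    by (simp add: eventually_at_right_less)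
  have ev: "eventually (\<lambda>e. (a - e)/(t - e) * \<psi> t \<le> \<psi> a + c * e) (at_right 0)"
    using ev1 ev2 c(2)
  proof eventually_elim
    case (elim e)
    define l where "l = (a - e)/(t - e)"
    have te: "t - e > 0" using elim at by simp
    have l0: "0 \<le> l" "l \<le> 1" using elim at te unfolding l_def by (auto simp: field_simps)
    have le: "l * (t - e) = a - e" using te unfolding l_def by simp
    have aeq: "a = (1 - l) *\<^sub>R e + l *\<^sub>R t" using le by (simp add: algebra_simps)
    have "\<psi> a \<ge> (1 - l) * \<psi> e + l * \<psi> t"
      unfolding aeq using concave_onD[OF conc l0] elim at by auto
    moreover have "(1 - l) * \<psi> e \<ge> - (c * e)"
    proof -
      have "\<bar>\<psi> e\<bar> \<le> c * e" using elim by simp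
      hence "(1 - l) * \<psi> e \<ge> - ((1 - l) * (c * e))"
        using l0 by (smt (verit, best) abs_le_D2 mult_left_mono mult_minus_right)
      moreover have "(1 - l) * (c * e) \<le> c * e" using l0 c(1) elim
        by (simp add: mult_left_le_one_le)
      ultimately show ?thesis by linarith
    qed
    ultimately show ?case unfolding l_def by linarith
  qed
  have t1: "((\<lambda>e. (a - e)/(t - e) * \<psi> t) \<longlongrightarrow> (a - 0)/(t - 0) * \<psi> t) (at_right 0)"
    using at assms by (intro tendsto_intros) auto
  have t2: "((\<lambda>e. \<psi> a + c * e) \<longlongrightarrow> \<psi> a + c * 0) (at_right 0)"
    by (intro tendsto_intros)
  have "(a - 0)/(t - 0) * \<psi> t \<le> \<psi> a + c * 0"
    using tendsto_le[OF _ t2 t1 ev] by simp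
  then show ?thesis using assms at by (simp add: field_simps)
qed

lemma pos: assumes "t > 0" shows "\<psi> t > 0"
proof (rule ccontr)
  assume "\<not> \<psi> t > 0" hence n: "\<psi> t \<le> 0" by simp
  have "eventually (\<lambda>s. 1 \<le> \<psi> s) at_top" using lim by (simp add: filterlim_at_top)
  then obtain N where N: "\<And>s. s \<ge> N \<Longrightarrow> 1 \<le> \<psi> s" by (auto simp: eventually_at_top_linorder)
  define s where "s = max N t"
  have "t * \<psi> s \<le> s * \<psi> t" using ratio[of t s] assms unfolding s_def by auto
  also have "\<dots> \<le> 0" using n assms unfolding s_def by (simp add: mult_nonneg_nonpos)
  finally have "\<psi> s \<le> 0" using assms by (simp add: mult_le_0_iff)
  moreover have "1 \<le> \<psi> s" using N unfolding s_def by simp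
  ultimately show False by simp
qed

lemma psi_mono: "0 \<le> a \<Longrightarrow> a \<le> b \<Longrightarrow> \<psi> a \<le> \<psi> b"
  using mon by (auto intro: mono_onD)

lemma scale: assumes "t > 0" "K \<ge> 1" shows "\<psi> (K * t) \<le> K * \<psi> t"
proof -
  have "t * \<psi> (K * t) \<le> (K * t) * \<psi> t" using ratio[of t "K*t"] assms by simp
  then show ?thesis using assms by (simp add: mult.assoc mult.left_commute[of t])
qed

lemma over_lin: "(\<lambda>m. \<psi> (real m) / real m) \<longlonglongrightarrow> 0"
proof -
  have "((\<lambda>t. \<psi> t / t) \<longlongrightarrow> 0) at_top" using smalloD_tendsto[OF so] .
  from filterlim_compose[OF this filterlim_real_sequentially] show ?thesis by (simp add: o_def)
qed

lemma seq_inf: "filterlim (\<lambda>m. \<psi> (real m)) at_top sequentially"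
  using filterlim_compose[OF lim filterlim_real_sequentially] by simp

lemma theta:
  assumes "Limsup at_top (\<lambda>t. ereal (\<psi> (2 * t) / \<psi> t)) < 2"
  obtains \<theta> T where "\<theta> < 2" "T > 0" "\<And>t. t \<ge> T \<Longrightarrow> \<psi> (2 * t) \<le> \<theta> * \<psi> t"
proof -
  obtain \<theta> where th: "Limsup at_top (\<lambda>t. ereal (\<psi> (2 * t) / \<psi> t)) < ereal \<theta>" "ereal \<theta> < 2"
    using ereal_dense2[OF assms] by blast
  have "eventually (\<lambda>t. ereal (\<psi> (2 * t) / \<psi> t) < ereal \<theta>) at_top"
    using Limsup_lessD[OF th(1)] .
  then obtain T where T: "\<And>t. t \<ge> T \<Longrightarrow> \<psi> (2 * t) / \<psi> t < \<theta>"
    by (auto simp: eventually_at_top_linorder)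
  show ?thesis
  proof
    show "\<theta> < 2" using th(2) by simp
    show "max T 1 > 0" by simp
    fix t assume "t \<ge> max T 1"
    hence "\<psi> (2 * t) / \<psi> t < \<theta>" "\<psi> t > 0" using T pos by auto
    thus "\<psi> (2 * t) \<le> \<theta> * \<psi> t" by (simp add: divide_less_eq)
  qed
qed

end


locale m_loc = psi_loc +
  fixes x :: "nat \<Rightarrow> real"
  assumes xm: "x \<in> m_psi \<psi>" and xpos: "\<And>k. 0 \<le> x k"
begin

definition S :: "nat \<Rightarrow> real" where "S m = (\<Sum>i<m. decr x i)"

lemma xB: "Bseq x" and avgb: "bdd_above (range (avg_seq \<psi> x))"
  using xm unfolding m_psi_def by auto

lemma absx[simp]: "\<bar>x j\<bar> = x j" using xpos[of j] by simp

definition Dset :: "nat \<Rightarrow> real set" where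
  "Dset k = {s. 0 \<le> s \<and> finite {j. s < \<bar>x j\<bar>} \<and> card {j. s < \<bar>x j\<bar>} \<le> k}"

lemma decr_Dset: "decr x k = Inf (Dset k)" unfolding decr_def Dset_def ..

lemma Dset_ne: "Dset k \<noteq> {}"
proof -
  obtain B where B: "B > 0" "\<And>j. norm (x j) \<le> B" using xB by (auto simp: Bseq_def)
  have "{j. B < \<bar>x j\<bar>} = {}" using B(2) by (auto simp: not_less)
  hence "B \<in> Dset k" using B unfolding Dset_def by simp
  thus ?thesis by auto
qed

lemma Dset_bdd: "bdd_below (Dset k)" unfolding Dset_def bdd_below_def by auto

lemma decr_nonneg: "0 \<le> decr x k"
  unfolding decr_Dset by (rule cInf_greatest[OF Dset_ne]) (auto simp: Dset_def)

lemma decr_le: "0 \<le> u \<Longrightarrow> finite {j. u < x j} \<Longrightarrow> card {j. u < x j} \<le> k \<Longrightarrow> decr x k \<le> u"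
  unfolding decr_Dset by (rule cInf_lower[OF _ Dset_bdd]) (auto simp: Dset_def)

lemma decr_ge: "(\<And>s. s \<in> Dset k \<Longrightarrow> v \<le> s) \<Longrightarrow> v \<le> decr x k"
  unfolding decr_Dset by (rule cInf_greatest[OF Dset_ne]) auto

lemma S_nonneg: "0 \<le> S m" unfolding S_def by (intro sum_nonneg decr_nonneg)

lemma S_split: "j \<le> m \<Longrightarrow> S m = S j + (\<Sum>i\<in>{j..<m}. decr x i)"
  unfolding S_def using sum.atLeastLessThan_concat[of 0 j m "decr x"]
  by (simp add: lessThan_atLeast0)

lemma S_mono: "j \<le> m \<Longrightarrow> S j \<le> S m"
  using S_split[of j m] sum_nonneg[of "{j..<m}" "decr x"] decr_nonneg by fastforce

lemma S_Suc: "S (Suc m) = S m + decr x m" unfolding S_def by simp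

definition Cb :: real where "Cb = Sup (range (avg_seq \<psi> x))"

lemma avg_le: "avg_seq \<psi> x n \<le> Cb"
  unfolding Cb_def by (rule cSup_upper[OF _ avgb]) auto

lemma avg_S: "avg_seq \<psi> x n = S (Suc n) / \<psi> (real (Suc n))"
  unfolding avg_seq_def S_def by (simp add: lessThan_Suc_atMost)

lemma S_le: assumes "m > 0" shows "S m \<le> Cb * \<psi> (real m)"
proof (cases m)
  case 0 then show ?thesis using assms by simp
next
  case (Suc n)
  have p: "\<psi> (real m) > 0" using pos Suc by simp
  have "S m / \<psi> (real m) \<le> Cb" using avg_le[of n] Suc avg_S by simp
  thus ?thesis using p by (simp add: divide_le_eq)
qed

lemma Cb_nonneg: "0 \<le> Cb"
  using avg_le[of 0] avg_S[of 0] S_nonneg[of 1] pos[of 1]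
  by (metis One_nat_def divide_nonneg_pos of_nat_1 order_trans zero_less_one)

lemma c0: "x \<longlonglongrightarrow> 0"
proof (rule ccontr)
  assume nc: "\<not> x \<longlonglongrightarrow> 0"
  then obtain r where r: "r > 0" "\<And>N. \<exists>n\<ge>N. r \<le> x n"
    unfolding LIMSEQ_iff by (auto simp: not_less)
  have inf: "infinite {j. r \<le> x j}"
    using r(2) by (auto simp: infinite_nat_iff_unbounded_le)
  have dge: "r \<le> decr x k" for k
  proof (rule decr_ge)
    fix s assume "s \<in> Dset k"
    hence fs: "finite {j. s < x j}" unfolding Dset_def by simp
    show "r \<le> s"
    proof (rule ccontr)
      assume "\<not> r \<le> s"
      hence "{j. r \<le> x j} \<subseteq> {j. s < x j}" by auto
      with fs inf show False using finite_subset by blast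
    qed
  qed
  have Sge: "real m * r \<le> S m" for m
  proof -
    have "real m * r = (\<Sum>i<m. r)" by simp
    also have "\<dots> \<le> S m" unfolding S_def by (intro sum_mono dge)
    finally show ?thesis .
  qed
  have "eventually (\<lambda>m. \<psi> (real m) / real m < r / (Cb + 1)) sequentially"
    using over_lin r(1) Cb_nonneg by (intro order_tendstoD) auto
  then obtain m where m: "\<psi> (real m) / real m < r / (Cb + 1)" "m \<ge> 1"
    by (metis (no_types, lifting) eventually_sequentially le_add2 add.commute eventually_at_top_linorder nat_le_linear)
  have pm: "\<psi> (real m) > 0" using pos m(2) by simp
  have "\<psi> (real m) * (Cb + 1) < r * real m"
    using m pm Cb_nonneg by (simp add: divide_less_eq field_simps)
  also have "\<dots> \<le> S m" using Sge[of m] by (simp add: mult.commute)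
  also have "\<dots> \<le> Cb * \<psi> (real m)" by (rule S_le) (use m(2) in simp)
  finally show False using pm by (simp add: algebra_simps)
qed

lemma fin_ge: "u > 0 \<Longrightarrow> finite {j. u \<le> x j}"
proof -
  assume u: "u > 0"
  then obtain N where N: "\<And>n. n \<ge> N \<Longrightarrow> \<bar>x n\<bar> < u"
    using c0 unfolding LIMSEQ_iff by fastforce
  have "{j. u \<le> x j} \<subseteq> {..<N}" using N by (force simp: not_le[symmetric])
  thus ?thesis using finite_subset by blast
qed

lemma fin_gt: "u > 0 \<Longrightarrow> finite {j. u < x j}"
  using fin_ge[of u] by (rule finite_subset[rotated]) auto

lemma char:
  assumes "v > 0" "card {j. v < x j} \<le> i" "i < card {j. v \<le> x j}"
  shows "decr x i = v"
proof (rule antisym)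
  show "decr x i \<le> v" using assms fin_gt[of v] by (intro decr_le) auto
  show "v \<le> decr x i"
  proof (rule decr_ge)
    fix s assume "s \<in> Dset i"
    hence fs: "finite {j. s < x j}" "card {j. s < x j} \<le> i" unfolding Dset_def by auto
    show "v \<le> s"
    proof (rule ccontr)
      assume "\<not> v \<le> s"
      hence "{j. v \<le> x j} \<subseteq> {j. s < x j}" by auto
      hence "card {j. v \<le> x j} \<le> card {j. s < x j}" using fs(1) by (rule card_mono[rotated])
      with fs(2) assms(3) show False by simp
    qed
  qed
qed

lemma R2_aux: "\<forall>u>0. card {j. u \<le> x j} = n \<longrightarrow> (\<Sum>j\<in>{j. u \<le> x j}. x j) = S n"
proof (induction n rule: less_induct)
  case (less n)
  show ?case
  proof (intro allI impI)
    fix u :: real assume u: "u > 0" and cn: "card {j. u \<le> x j} = n"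
    define E where "E = {j. u \<le> x j}"
    have fE: "finite E" using fin_ge[OF u] unfolding E_def .
    show "(\<Sum>j\<in>{j. u \<le> x j}. x j) = S n"
    proof (cases "E = {}")
      case True
      then show ?thesis using cn fE unfolding E_def[symmetric] by (simp add: S_def)
    next
      case False
      define m where "m = Min (x ` E)"
      have mE: "m \<in> x ` E" unfolding m_def using fE False by (intro Min_in) auto
      have mu: "u \<le> m" using mE unfolding E_def by auto
      have m0: "m > 0" using mu u by simp
      have Eeq: "E = {j. m \<le> x j}"
      proof
        show "E \<subseteq> {j. m \<le> x j}" unfolding m_def using fE by auto
        show "{j. m \<le> x j} \<subseteq> E" using mu unfolding E_def by auto
      qed
      define E' where "E' = {j. m < x j}"
      have sub: "E' \<subseteq> E" unfolding E'_def Eeq by auto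
      have fE': "finite E'" using sub fE finite_subset by blast
      obtain j0 where j0: "j0 \<in> E" "x j0 = m" using mE by auto
      have j0': "j0 \<notin> E'" using j0 unfolding E'_def by auto
      have psub: "E' \<subset> E" using sub j0 j0' by auto
      have clt: "card E' < n" using psubset_card_mono[OF fE psub] cn unfolding E_def by simp
      have IH': "(\<Sum>j\<in>E'. x j) = S (card E')"
      proof (cases "E' = {}")
        case True then show ?thesis by (simp add: S_def)
      next
        case False
        define m' where "m' = Min (x ` E')"
        have mE': "m' \<in> x ` E'" unfolding m'_def using fE' False by (intro Min_in) auto
        have mm: "m < m'" using mE' unfolding E'_def by auto
        have Eeq': "E' = {j. m' \<le> x j}"
        proof
          show "E' \<subseteq> {j. m' \<le> x j}" unfolding m'_def using fE' by auto
          show "{j. m' \<le> x j} \<subseteq> E'" using mm unfolding E'_def by auto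
        qed
        show ?thesis using less.IH[OF clt] mm m0 Eeq' by auto
      qed
      have diff: "E - E' = {j. x j = m}" unfolding Eeq E'_def by auto
      have "(\<Sum>j\<in>E. x j) = (\<Sum>j\<in>E'. x j) + (\<Sum>j\<in>E - E'. x j)"
        using sum.subset_diff[OF sub fE, of x] by simp
      also have "(\<Sum>j\<in>E - E'. x j) = real (card (E - E')) * m"
        unfolding diff by simp
      also have "card (E - E') = card E - card E'" using card_Diff_subset[OF fE' sub] .
      finally have L: "(\<Sum>j\<in>E. x j) = S (card E') + real (card E - card E') * m" using IH' by simp
      have ce: "card E' \<le> card E" using card_mono[OF fE sub] .
      have "S (card E) = S (card E') + (\<Sum>i\<in>{card E'..<card E}. decr x i)"
        using S_split[OF ce] .
      also have "(\<Sum>i\<in>{card E'..<card E}. decr x i) = (\<Sum>i\<in>{card E'..<card E}. m)"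
        by (rule sum.cong[OF refl], rule char) (use m0 in \<open>auto simp: E'_def Eeq\<close>)
      also have "\<dots> = real (card E - card E') * m" by simp
      finally show ?thesis using L cn unfolding E_def by simp
    qed
  qed
qed

lemma R2: "u > 0 \<Longrightarrow> (\<Sum>j\<in>{j. u \<le> x j}. x j) = S (card {j. u \<le> x j})"
  using R2_aux by blast

lemma decr_small: "u > 0 \<Longrightarrow> card {j. u \<le> x j} \<le> i \<Longrightarrow> decr x i \<le> u"
  by (rule decr_le) (auto intro: fin_gt order.trans[OF card_mono[OF fin_ge]])

end


definition bnd :: "(nat \<Rightarrow> real) \<Rightarrow> bool" where "bnd a \<longleftrightarrow> (\<exists>B. \<forall>m. \<bar>a m\<bar> \<le> B)"

lemma bnd_Bseq: "bnd a \<Longrightarrow> Bseq (\<lambda>n. a (f n))"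
proof -
  assume "bnd a"
  then obtain B where B: "\<And>m. \<bar>a m\<bar> \<le> B" unfolding bnd_def by blast
  show ?thesis by (rule BseqI'[of _ B]) (simp add: B)
qed

lemma Bseq_const1: "Bseq (\<lambda>_. c::real)"
  by (rule BseqI'[of _ "\<bar>c\<bar>"]) simp

lemma Bseq_diff1: "Bseq (f::nat\<Rightarrow>real) \<Longrightarrow> Bseq g \<Longrightarrow> Bseq (\<lambda>k. g k - f k)"
proof -
  assume "Bseq f" "Bseq g"
  then obtain A B where A: "\<And>n. norm (f n) \<le> A" and B: "\<And>n. norm (g n) \<le> B"
    unfolding Bseq_def by blast
  show ?thesis by (rule BseqI'[of _ "A + B"]) (use A B in \<open>smt (verit) real_norm_def\<close>)
qed

lemma bnd_Bseq': "bnd a \<Longrightarrow> Bseq a"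
  using bnd_Bseq[of a id] by simp

lemma null_Bseq: "f \<longlonglongrightarrow> (0::real) \<Longrightarrow> Bseq f"
  by (rule convergent_imp_Bseq) (auto simp: convergent_def)

lemma slow_shift_j:
  assumes "(\<lambda>m. a (Suc m) - a m) \<longlonglongrightarrow> (0::real)"
  shows "(\<lambda>m. a (m + j) - a m) \<longlonglongrightarrow> 0"
proof (induction j)
  case 0 then show ?case by simp
next
  case (Suc j)
  have "(\<lambda>m. a (Suc (m + j)) - a (m + j)) \<longlonglongrightarrow> 0"
    using LIMSEQ_ignore_initial_segment[OF assms, of j] by simp
  from tendsto_add[OF this Suc] show ?case by simp
qed

lemma slow_shift:
  assumes sl: "(\<lambda>m. a (Suc m) - a m) \<longlonglongrightarrow> (0::real)"
    and g: "filterlim g at_top sequentially"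
    and gh: "\<And>n. h n \<le> g n + d" "\<And>n. g n \<le> h n + d"
  shows "(\<lambda>n. a (g n) - a (h n)) \<longlonglongrightarrow> 0"
proof -
  define \<phi> where "\<phi> m = (\<Sum>j\<le>d. \<bar>a (m + j) - a m\<bar>)" for m
  have phi: "\<phi> \<longlonglongrightarrow> 0" unfolding \<phi>_def
    by (intro tendsto_null_sum tendsto_rabs_zero slow_shift_j[OF sl])
  have mn: "filterlim (\<lambda>n. min (g n) (h n)) at_top sequentially"
    unfolding filterlim_at_top
  proof
    fix Z :: nat
    have "eventually (\<lambda>n. Z + d \<le> g n) sequentially" using g by (simp add: filterlim_at_top)
    thus "eventually (\<lambda>n. Z \<le> min (g n) (h n)) sequentially"
    proof eventually_elim
      case (elim n)
      have "g n \<le> h n + d" by (rule gh(2))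
      with elim show ?case by simp
    qed
  qed
  have phi2: "(\<lambda>n. \<phi> (min (g n) (h n))) \<longlonglongrightarrow> 0"
    using filterlim_compose[OF phi mn] by simp
  have phi0: "0 \<le> \<phi> m" for m unfolding \<phi>_def by (simp add: sum_nonneg)
  have le: "\<bar>a (g n) - a (h n)\<bar> \<le> \<phi> (min (g n) (h n))" for n
  proof (cases "h n \<le> g n")
    case True
    define j where "j = g n - h n"
    have j: "j \<le> d" "g n = h n + j" using True gh(2)[of n] unfolding j_def by auto
    have "\<bar>a (h n + j) - a (h n)\<bar> \<le> \<phi> (h n)" unfolding \<phi>_def
      using j(1) by (intro member_le_sum) auto
    thus ?thesis using True j phi0 by (simp add: min_def)
  next
    case False
    define j where "j = h n - g n"
    have j: "j \<le> d" "h n = g n + j" using False gh(1)[of n] unfolding j_def by auto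
    have "\<bar>a (g n + j) - a (g n)\<bar> \<le> \<phi> (g n)" unfolding \<phi>_def
      using j(1) by (intro member_le_sum) auto
    thus ?thesis using False j phi0 by (simp add: min_def abs_minus_commute)
  qed
  show ?thesis
    by (rule Lim_null_comparison[OF _ phi2]) (use le in auto)
qed

locale om_loc =
  fixes \<omega> :: "(nat \<Rightarrow> real) \<Rightarrow> real"
  assumes dil: "dil_inv_gen_limit \<omega>"
begin

lemma lin: "Bseq f \<Longrightarrow> Bseq g \<Longrightarrow> \<omega> (\<lambda>k. a * f k + b * g k) = a * \<omega> f + b * \<omega> g"
  using dil unfolding dil_inv_gen_limit_def by blast

lemma om_pos: "Bseq f \<Longrightarrow> (\<And>k. 0 \<le> f k) \<Longrightarrow> 0 \<le> \<omega> f"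
  using dil unfolding dil_inv_gen_limit_def by blast

lemma om_one: "\<omega> (\<lambda>_. 1) = 1"
  using dil unfolding dil_inv_gen_limit_def by blast

lemma om_null: "f \<longlonglongrightarrow> 0 \<Longrightarrow> \<omega> f = 0"
  using dil unfolding dil_inv_gen_limit_def by blast

lemma om_sigma: "1 \<le> n \<Longrightarrow> Bseq f \<Longrightarrow> \<omega> (sigma n f) = \<omega> f"
  using dil unfolding dil_inv_gen_limit_def by blast

lemma om_add: "Bseq f \<Longrightarrow> Bseq g \<Longrightarrow> \<omega> (\<lambda>k. f k + g k) = \<omega> f + \<omega> g"
  using lin[of f g 1 1] by simp

lemma om_diff: "Bseq f \<Longrightarrow> Bseq g \<Longrightarrow> \<omega> (\<lambda>k. f k - g k) = \<omega> f - \<omega> g"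
  using lin[of f g 1 "-1"] by simp

lemma om_smult: "Bseq f \<Longrightarrow> \<omega> (\<lambda>k. c * f k) = c * \<omega> f"
  using lin[of f f c 0] by simp

lemma om_const: "\<omega> (\<lambda>_. c) = c"
  using om_smult[of "\<lambda>_. 1" c] om_one by (simp add: Bseq_const1)

lemma om_mono_ev:
  assumes f: "Bseq f" and g: "Bseq g" and ev: "eventually (\<lambda>k. f k \<le> g k) sequentially"
  shows "\<omega> f \<le> \<omega> g"
proof -
  define h where "h k = g k - f k" for k
  have hB: "Bseq h" unfolding h_def using f g by (rule Bseq_diff1)
  have p: "Bseq (\<lambda>k. max (h k) 0)"
    by (rule Bseq_eventually_mono[OF _ hB]) (intro always_eventually, auto)
  have q: "Bseq (\<lambda>k. min (h k) 0)"
    by (rule Bseq_eventually_mono[OF _ hB]) (intro always_eventually, auto)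
  have qn: "(\<lambda>k. min (h k) 0) \<longlonglongrightarrow> 0"
  proof (rule tendsto_eventually)
    show "eventually (\<lambda>k. min (h k) 0 = 0) sequentially"
      using ev by eventually_elim (auto simp: h_def)
  qed
  have "\<omega> h = \<omega> (\<lambda>k. max (h k) 0 + min (h k) 0)"
    by (rule arg_cong[where f=\<omega>]) auto
  also have "\<dots> = \<omega> (\<lambda>k. max (h k) 0) + \<omega> (\<lambda>k. min (h k) 0)" by (rule om_add[OF p q])
  also have "\<omega> (\<lambda>k. min (h k) 0) = 0" using om_null[OF qn] .
  finally have "\<omega> h \<ge> 0" using om_pos[OF p] by simp
  moreover have "\<omega> h = \<omega> g - \<omega> f" unfolding h_def by (rule om_diff[OF g f])
  ultimately show ?thesis by simp
qed

lemma div_tends: "(K::nat) \<ge> 1 \<Longrightarrow> filterlim (\<lambda>n. n div K + 1) at_top sequentially"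
  unfolding filterlim_at_top
proof
  fix Z :: nat assume K: "K \<ge> 1"
  show "eventually (\<lambda>n. Z \<le> n div K + 1) sequentially"
    unfolding eventually_sequentially
  proof (intro exI allI impI)
    fix n assume "Z * K \<le> n"
    hence "Z * K div K \<le> n div K" by (rule div_le_mono)
    thus "Z \<le> n div K + 1" using K by simp
  qed
qed

lemma om_down:
  assumes b: "bnd a" and sl: "(\<lambda>m. a (Suc m) - a m) \<longlonglongrightarrow> 0" and K: "K \<ge> 1"
  shows "\<omega> (\<lambda>n. a ((n + 1) div K)) = \<omega> (\<lambda>n. a (n + 1))"
proof -
  have "\<omega> (\<lambda>n. a (n + 1)) = \<omega> (sigma K (\<lambda>n. a (n + 1)))"
    using om_sigma[OF K bnd_Bseq[OF b]] by simp
  also have "sigma K (\<lambda>n. a (n + 1)) = (\<lambda>n. a (n div K + 1))" unfolding sigma_def ..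
  finally have e: "\<omega> (\<lambda>n. a (n + 1)) = \<omega> (\<lambda>n. a (n div K + 1))" .
  have h1: "(n + 1) div K \<le> n div K + 1 + 1" for n
  proof -
    have "(n + 1) div K \<le> (n + K) div K" using K by (intro div_le_mono) simp
    also have "\<dots> = n div K + 1" using K by simp
    finally show ?thesis by simp
  qed
  have h2: "n div K + 1 \<le> (n + 1) div K + 1" for n by (simp add: div_le_mono)
  have "(\<lambda>n. a (n div K + 1) - a ((n + 1) div K)) \<longlonglongrightarrow> 0"
    by (rule slow_shift[OF sl div_tends[OF K], of _ 1]) (use h1 h2 in auto)
  hence "\<omega> (\<lambda>n. a (n div K + 1) - a ((n + 1) div K)) = 0" by (rule om_null)
  hence "\<omega> (\<lambda>n. a (n div K + 1)) - \<omega> (\<lambda>n. a ((n + 1) div K)) = 0"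
    using om_diff[OF bnd_Bseq[OF b] bnd_Bseq[OF b]] by simp
  thus ?thesis using e by simp
qed

lemma om_up:
  assumes b: "bnd a" and sl: "(\<lambda>m. a (Suc m) - a m) \<longlonglongrightarrow> 0" and K: "K \<ge> 1"
  shows "\<omega> (\<lambda>n. a (K * (n + 1))) = \<omega> (\<lambda>n. a (n + 1))"
proof -
  have "\<omega> (\<lambda>n. a (K * (n + 1))) = \<omega> (sigma K (\<lambda>n. a (K * (n + 1))))"
    using om_sigma[OF K bnd_Bseq[OF b]] by simp
  also have "sigma K (\<lambda>n. a (K * (n + 1))) = (\<lambda>n. a (K * (n div K + 1)))" unfolding sigma_def ..
  finally have e: "\<omega> (\<lambda>n. a (K * (n + 1))) = \<omega> (\<lambda>n. a (K * (n div K + 1)))" .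
  have h1: "n + 1 \<le> K * (n div K + 1) + K" for n
  proof -
    have "n < K * (n div K) + K" using K
      by (metis add.commute div_mult_mod_eq mod_less_divisor nat_add_left_cancel_less
          less_le_trans not_less zero_less_one mult.commute)
    thus ?thesis by (simp add: algebra_simps)
  qed
  have h2: "K * (n div K + 1) \<le> n + 1 + K" for n
  proof -
    have "K * (n div K) \<le> n" by (metis mult.commute div_times_less_eq_dividend)
    moreover have "K * (n div K + 1) = K * (n div K) + K" by (simp add: algebra_simps)
    ultimately show ?thesis by linarith
  qed
  have gt: "filterlim (\<lambda>n. K * (n div K + 1)) at_top sequentially"
  proof (rule filterlim_at_top_mono[OF div_tends[OF K]])
    show "eventually (\<lambda>n. n div K + 1 \<le> K * (n div K + 1)) sequentially"
      using K by (intro always_eventually allI) (metis mult_le_mono1 mult_1)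
  qed
  have "(\<lambda>n. a (K * (n div K + 1)) - a (n + 1)) \<longlonglongrightarrow> 0"
    by (rule slow_shift[OF sl gt, of _ K]) (use h1 h2 in auto)
  hence "\<omega> (\<lambda>n. a (K * (n div K + 1)) - a (n + 1)) = 0" by (rule om_null)
  hence "\<omega> (\<lambda>n. a (K * (n div K + 1))) - \<omega> (\<lambda>n. a (n + 1)) = 0"
    using om_diff[OF bnd_Bseq[OF b] bnd_Bseq[OF b]] by simp
  thus ?thesis using e by simp
qed

end


context m_loc begin

definition G :: "nat \<Rightarrow> nat \<Rightarrow> real" where
  "G K m = (S m - S (m div K)) / \<psi> (real m)"

lemma G_nonneg: "0 \<le> G K m"
proof (cases "m = 0")
  case True then show ?thesis by (simp add: G_def)
next
  case False
  hence "\<psi> (real m) > 0" using pos by simp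
  moreover have "S (m div K) \<le> S m" by (rule S_mono) simp
  ultimately show ?thesis unfolding G_def by simp
qed

lemma G_le: "G K m \<le> Cb"
proof (cases "m = 0")
  case True then show ?thesis using Cb_nonneg by (simp add: G_def)
next
  case False
  hence p: "\<psi> (real m) > 0" using pos by simp
  have "S m - S (m div K) \<le> Cb * \<psi> (real m)"
    using S_le[of m] False S_nonneg[of "m div K"] by simp
  thus ?thesis unfolding G_def using p by (simp add: divide_le_eq)
qed

lemma G_bnd: "bnd (G K)"
  unfolding bnd_def using G_nonneg G_le by (intro exI[of _ Cb]) (auto simp: abs_le_iff intro: order_trans[OF _ G_nonneg])

lemma decr_lim: "(\<lambda>i. decr x i) \<longlonglongrightarrow> 0"
  unfolding LIMSEQ_iff
proof (intro allI impI)
  fix r :: real assume r: "r > 0"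
  show "\<exists>N. \<forall>n\<ge>N. norm (decr x n - 0) < r"
  proof (intro exI allI impI)
    fix n assume "card {j. r/2 \<le> x j} \<le> n"
    hence "decr x n \<le> r/2" using r by (intro decr_small) auto
    thus "norm (decr x n - 0) < r" using decr_nonneg[of n] r by simp
  qed
qed

lemma div_tends0: "(K::nat) \<ge> 1 \<Longrightarrow> filterlim (\<lambda>n. n div K) at_top sequentially"
  unfolding filterlim_at_top
proof
  fix Z :: nat assume K: "K \<ge> 1"
  show "eventually (\<lambda>n. Z \<le> n div K) sequentially"
    unfolding eventually_sequentially
  proof (intro exI allI impI)
    fix n assume "Z * K \<le> n"
    hence "Z * K div K \<le> n div K" by (rule div_le_mono)
    thus "Z \<le> n div K" using K by simp
  qed
qed

lemma G_slow:
  assumes K: "K \<ge> 1"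
  shows "(\<lambda>m. G K (Suc m) - G K m) \<longlonglongrightarrow> 0"
proof -
  define b where "b m = (decr x m + decr x (m div K)) / \<psi> 1 + Cb / real m" for m
  have bl: "b \<longlonglongrightarrow> 0"
  proof -
    have d2: "(\<lambda>m. decr x (m div K)) \<longlonglongrightarrow> 0"
      using filterlim_compose[OF decr_lim div_tends0[OF K]] by simp
    have psi1: "\<psi> 1 \<noteq> 0" using pos[of 1] by simp
    have "(\<lambda>m. (decr x m + decr x (m div K)) / \<psi> 1 + Cb / real m) \<longlonglongrightarrow> (0 + 0) / \<psi> 1 + 0"
      using psi1 by (intro tendsto_intros decr_lim d2) auto
    thus ?thesis unfolding b_def by simp
  qed
  have le: "\<bar>G K (Suc m) - G K m\<bar> \<le> b m" if m: "m \<ge> 1" for m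
  proof -
    define P where "P = S (Suc m) - S (Suc m div K)"
    define Q where "Q = S m - S (m div K)"
    define p1 where "p1 = \<psi> (real (Suc m))"
    define p0 where "p0 = \<psi> (real m)"
    have p0: "p0 > 0" unfolding p0_def using pos m by simp
    have p01: "p0 \<le> p1" unfolding p0_def p1_def by (rule psi_mono) auto
    have psi1: "\<psi> 1 \<le> p1" unfolding p1_def by (rule psi_mono) auto
    have psi1p: "\<psi> 1 > 0" using pos by simp
    have rat: "real m * p1 \<le> real (Suc m) * p0"
      unfolding p0_def p1_def using ratio[of "real m" "real (Suc m)"] m by simp
    have Q0: "0 \<le> Q" unfolding Q_def using S_mono[of "m div K" m] by simp
    have QC: "Q \<le> Cb * p0" unfolding Q_def p0_def using S_le[of m] m S_nonneg[of "m div K"] by simp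
    define dl where "dl = S (Suc m div K) - S (m div K)"
    have dl: "0 \<le> dl" "dl \<le> decr x (m div K)"
    proof -
      have a1: "m div K \<le> Suc m div K" by (rule div_le_mono) simp
      have a2: "Suc m div K \<le> Suc (m div K)"
      proof -
        have "Suc m div K \<le> (m + K) div K" using K by (intro div_le_mono) simp
        also have "\<dots> = Suc (m div K)" using K by simp
        finally show ?thesis .
      qed
      show "0 \<le> dl" unfolding dl_def using S_mono[OF a1] by simp
      show "dl \<le> decr x (m div K)"
      proof (cases "Suc m div K = m div K")
        case True then show ?thesis unfolding dl_def using decr_nonneg by simp
      next
        case False
        hence "Suc m div K = Suc (m div K)" using a1 a2 by linarith
        thus ?thesis unfolding dl_def using S_Suc by simp
      qed
    qed
    have PQ: "P - Q = decr x m - dl" unfolding P_def Q_def dl_def using S_Suc[of m] by simp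
    have aPQ: "\<bar>P - Q\<bar> \<le> decr x m + decr x (m div K)"
      using PQ dl decr_nonneg[of m] by simp
    have e1: "\<bar>(P - Q) / p1\<bar> \<le> (decr x m + decr x (m div K)) / \<psi> 1"
    proof -
      have "\<bar>(P - Q) / p1\<bar> = \<bar>P - Q\<bar> / p1" using p0 p01 by simp
      also have "\<dots> \<le> (decr x m + decr x (m div K)) / \<psi> 1"
        by (rule frac_le) (use aPQ psi1 psi1p in auto)
      finally show ?thesis .
    qed
    have e2: "\<bar>Q / p1 - Q / p0\<bar> \<le> Cb / real m"
    proof -
      have p1p: "p1 > 0" using p0 p01 by simp
      have eq: "Q / p0 - Q / p1 = Q * (p1 - p0) / (p0 * p1)" using p0 p1p by (simp add: field_simps)
      have nn: "0 \<le> Q * (p1 - p0) / (p0 * p1)" using Q0 p01 p0 p1p by simp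
      have "Q * (p1 - p0) \<le> Cb * p0 * (p1 - p0)" using QC p01 by (intro mult_right_mono) auto
      hence "Q * (p1 - p0) / (p0 * p1) \<le> Cb * p0 * (p1 - p0) / (p0 * p1)"
        using p0 p1p by (intro divide_right_mono) auto
      also have "\<dots> = Cb * (p1 - p0) / p1" using p0 p1p by (simp add: field_simps)
      also have "\<dots> \<le> Cb / real m"
      proof -
        have "real m * (p1 - p0) \<le> p1" using rat p01 by (simp add: algebra_simps)
        hence "Cb * (real m * (p1 - p0)) \<le> Cb * p1" using Cb_nonneg by (intro mult_left_mono) auto
        thus ?thesis using m p1p by (simp add: field_simps)
      qed
      finally show ?thesis using eq nn by simp
    qed
    have "G K (Suc m) - G K m = (P - Q) / p1 + (Q / p1 - Q / p0)"
      unfolding G_def P_def Q_def p1_def p0_def by (simp add: diff_divide_distrib)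
    hence "\<bar>G K (Suc m) - G K m\<bar> \<le> \<bar>(P - Q) / p1\<bar> + \<bar>Q / p1 - Q / p0\<bar>"
      by (metis abs_triangle_ineq)
    also have "\<dots> \<le> b m" unfolding b_def using e1 e2 by simp
    finally show ?thesis .
  qed
  show ?thesis
  proof (rule Lim_null_comparison[OF _ bl])
    show "eventually (\<lambda>m. norm (G K (Suc m) - G K m) \<le> b m) sequentially"
      unfolding eventually_sequentially using le by auto
  qed
qed

lemma s_bound:
  assumes "Limsup at_top (\<lambda>t. ereal (\<psi> (2 * t) / \<psi> t)) < 2"
  obtains p N0 where "\<And>N. N \<ge> N0 \<Longrightarrow> card {j. \<psi> (real N) / real N \<le> x j} \<le> 2 ^ p * N"
proof -
  obtain \<theta> T where th: "\<theta> < 2" "T > 0" "\<And>t. t \<ge> T \<Longrightarrow> \<psi> (2 * t) \<le> \<theta> * \<psi> t"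
    using theta[OF assms] by blast
  define \<theta>' where "\<theta>' = max \<theta> 1"
  have th1: "1 \<le> \<theta>'" "\<theta>' < 2" using th unfolding \<theta>'_def by auto
  have th': "\<psi> (2 * t) \<le> \<theta>' * \<psi> t" if "t \<ge> T" for t
  proof -
    have "\<psi> t > 0" using pos th(2) that by simp
    hence "\<theta> * \<psi> t \<le> \<theta>' * \<psi> t" unfolding \<theta>'_def by (intro mult_right_mono) auto
    thus ?thesis using th(3)[OF that] by simp
  qed
  define r where "r = \<theta>' / 2"
  have r: "0 < r" "r < 1" using th1 unfolding r_def by auto
  have "(\<lambda>n. r ^ n) \<longlonglongrightarrow> 0" using r by (intro LIMSEQ_power_zero) auto
  hence "eventually (\<lambda>n. r ^ n < 1 / (Cb + 1)) sequentially"
    using Cb_nonneg by (intro order_tendstoD) auto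
  then obtain p where rp: "r ^ p < 1 / (Cb + 1)" by (auto simp: eventually_sequentially)
  have powb: "\<psi> (2 ^ q * t) \<le> \<theta>' ^ q * \<psi> t" if "t \<ge> T" for q t
  proof (induction q)
    case 0 then show ?case by simp
  next
    case (Suc q)
    have "2 ^ q * t \<ge> T"
    proof -
      have "(1::real) \<le> 2 ^ q" by simp
      hence "1 * t \<le> 2 ^ q * t" using that th(2) by (intro mult_right_mono) auto
      thus ?thesis using that by simp
    qed
    hence "\<psi> (2 * (2 ^ q * t)) \<le> \<theta>' * \<psi> (2 ^ q * t)" by (rule th')
    also have "\<dots> \<le> \<theta>' * (\<theta>' ^ q * \<psi> t)" using Suc th1 by (intro mult_left_mono) auto
    finally show ?case by (simp add: mult.assoc)
  qed
  define K :: nat where "K = 2 ^ p"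
  define N0 :: nat where "N0 = nat \<lceil>T\<rceil> + 1"
  show ?thesis
  proof (rule that[of N0 p])
    fix N assume N: "N \<ge> N0"
    have NT: "real N \<ge> T" and N1: "N \<ge> 1" using N unfolding N0_def by linarith+
    define u where "u = \<psi> (real N) / real N"
    have pN: "\<psi> (real N) > 0" using pos N1 by simp
    have u0: "u > 0" unfolding u_def using pN N1 by simp
    define s where "s = card {j. u \<le> x j}"
    show "card {j. \<psi> (real N) / real N \<le> x j} \<le> 2 ^ p * N"
    proof (rule ccontr)
      assume "\<not> ?thesis"
      hence sK: "s > K * N" unfolding s_def u_def K_def by simp
      hence s0: "s > 0" by simp
      have "real s * u \<le> (\<Sum>j\<in>{j. u \<le> x j}. x j)"
        unfolding s_def by (rule sum_bounded_below) auto
      also have "\<dots> = S s" unfolding s_def by (rule R2[OF u0])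
      also have "\<dots> \<le> Cb * \<psi> (real s)" by (rule S_le[OF s0])
      finally have A: "real s * u \<le> Cb * \<psi> (real s)" .
      have KN: "real (K * N) > 0" using N1 unfolding K_def by simp
      have "real (K * N) * \<psi> (real s) \<le> real s * \<psi> (real (K * N))"
      proof -
        have "real (K*N) \<le> real s" using sK by (metis less_imp_le of_nat_le_iff)
        thus ?thesis using ratio[of "real (K*N)" "real s"] KN by simp
      qed
      also have "\<psi> (real (K * N)) \<le> \<theta>' ^ p * \<psi> (real N)"
        using powb[OF NT, of p] unfolding K_def by simp
      hence "real s * \<psi> (real (K * N)) \<le> real s * (\<theta>' ^ p * \<psi> (real N))"
        by (intro mult_left_mono) auto
      finally have B: "real (K * N) * \<psi> (real s) \<le> real s * (\<theta>' ^ p * \<psi> (real N))" .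
      have "\<theta>' ^ p * \<psi> (real N) = real (K * N) * (r ^ p * u)"
        unfolding r_def u_def K_def using N1 by (simp add: field_simps power_divide)
      hence "real (K * N) * \<psi> (real s) \<le> real (K * N) * (real s * (r ^ p * u))"
        using B by (simp add: algebra_simps)
      hence C: "\<psi> (real s) \<le> real s * (r ^ p * u)" using KN mult_le_cancel_left_pos by blast
      have "real s * u \<le> Cb * (real s * (r ^ p * u))"
        using A C Cb_nonneg by (meson mult_left_mono order_trans)
      also have "\<dots> = (real s * u) * (Cb * r ^ p)" by (simp add: algebra_simps)
      finally have D: "1 \<le> Cb * r ^ p" using s0 u0 by simp
      have "Cb * r ^ p \<le> Cb * (1 / (Cb + 1))" using rp Cb_nonneg by (intro mult_left_mono) auto
      also have "\<dots> < 1" using Cb_nonneg by (simp add: field_simps)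
      finally show False using D by simp
    qed
  qed
qed

end


lemma decr_cong:
  fixes y z :: "nat \<Rightarrow> real"
  assumes "\<And>s. 0 \<le> s \<Longrightarrow> (finite {j. s < \<bar>y j\<bar>} \<and> card {j. s < \<bar>y j\<bar>} \<le> k) \<longleftrightarrow>
                          (finite {j. s < \<bar>z j\<bar>} \<and> card {j. s < \<bar>z j\<bar>} \<le> k')"
  shows "decr y k = decr z k'"
  unfolding decr_def by (rule arg_cong[where f=Inf]) (use assms in blast)

lemma set_ev:
  fixes y :: "nat \<Rightarrow> real"
  assumes s: "0 \<le> s"
  shows "{j. s < \<bar>(if even j then y (j div 2) else 0::real)\<bar>} = (\<lambda>j. 2 * j) ` {j. s < \<bar>y j\<bar>}"
proof (rule set_eqI, rule iffI)
  fix j assume "j \<in> {j. s < \<bar>(if even j then y (j div 2) else 0::real)\<bar>}"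
  hence e: "even j" "s < \<bar>y (j div 2)\<bar>" using s by (auto split: if_splits)
  have "j = 2 * (j div 2)" using e(1) by simp
  thus "j \<in> (\<lambda>j. 2 * j) ` {j. s < \<bar>y j\<bar>}" using e(2) by blast
next
  fix j assume "j \<in> (\<lambda>j. 2 * j) ` {j. s < \<bar>y j\<bar>}"
  then obtain i where "j = 2 * i" "s < \<bar>y i\<bar>" by blast
  thus "j \<in> {j. s < \<bar>(if even j then y (j div 2) else 0::real)\<bar>}" by simp
qed

lemma set_od:
  fixes y :: "nat \<Rightarrow> real"
  assumes s: "0 \<le> s"
  shows "{j. s < \<bar>(if odd j then y (j div 2) else 0::real)\<bar>} = (\<lambda>j. 2 * j + 1) ` {j. s < \<bar>y j\<bar>}"
proof (rule set_eqI, rule iffI)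
  fix j assume "j \<in> {j. s < \<bar>(if odd j then y (j div 2) else 0::real)\<bar>}"
  hence e: "odd j" "s < \<bar>y (j div 2)\<bar>" using s by (auto split: if_splits)
  have "j = 2 * (j div 2) + 1" using e(1) by simp
  thus "j \<in> (\<lambda>j. 2 * j + 1) ` {j. s < \<bar>y j\<bar>}" using e(2) by blast
next
  fix j assume "j \<in> (\<lambda>j. 2 * j + 1) ` {j. s < \<bar>y j\<bar>}"
  then obtain i where "j = 2 * i + 1" "s < \<bar>y i\<bar>" by blast
  thus "j \<in> {j. s < \<bar>(if odd j then y (j div 2) else 0::real)\<bar>}" by simp
qed

lemma set_sig:
  fixes y :: "nat \<Rightarrow> real"
  shows "{j. s < \<bar>y (j div 2)\<bar>} = (\<lambda>j. 2 * j) ` {j. s < \<bar>y j\<bar>} \<union> (\<lambda>j. 2 * j + 1) ` {j. s < \<bar>y j\<bar>}"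
proof (rule set_eqI, rule iffI)
  fix j assume j: "j \<in> {j. s < \<bar>y (j div 2)\<bar>}"
  show "j \<in> (\<lambda>j. 2 * j) ` {j. s < \<bar>y j\<bar>} \<union> (\<lambda>j. 2 * j + 1) ` {j. s < \<bar>y j\<bar>}"
  proof (cases "even j")
    case True
    hence "j = 2 * (j div 2)" by simp
    thus ?thesis using j by blast
  next
    case False
    hence "j = 2 * (j div 2) + 1" by simp
    thus ?thesis using j by blast
  qed
next
  fix j assume "j \<in> (\<lambda>j. 2 * j) ` {j. s < \<bar>y j\<bar>} \<union> (\<lambda>j. 2 * j + 1) ` {j. s < \<bar>y j\<bar>}"
  thus "j \<in> {j. s < \<bar>y (j div 2)\<bar>}" by auto
qed

lemma decr_ev:
  fixes y :: "nat \<Rightarrow> real"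
  shows "decr (\<lambda>j. if even j then y (j div 2) else 0) k = decr y k"
  by (rule decr_cong) (simp add: set_ev finite_image_iff card_image inj_on_def)

lemma decr_od:
  fixes y :: "nat \<Rightarrow> real"
  shows "decr (\<lambda>j. if odd j then y (j div 2) else 0) k = decr y k"
  by (rule decr_cong) (simp add: set_od finite_image_iff card_image inj_on_def)

lemma decr_sig:
  fixes y :: "nat \<Rightarrow> real"
  shows "decr (sigma 2 y) k = decr y (k div 2)"
proof (rule decr_cong)
  fix s :: real
  define A where "A = {j. s < \<bar>y j\<bar>}"
  define U where "U = (\<lambda>j. 2 * j) ` A \<union> (\<lambda>j. 2 * j + 1) ` A"
  have UU: "{j. s < \<bar>sigma 2 y j\<bar>} = U"
    unfolding sigma_def A_def U_def by (rule set_sig)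
  have i1: "inj_on (\<lambda>j::nat. 2 * j) A" and i2: "inj_on (\<lambda>j::nat. 2 * j + 1) A"
    by (auto simp: inj_on_def)
  have fin: "finite U \<longleftrightarrow> finite A"
  proof
    assume "finite U"
    moreover have "(\<lambda>j. 2 * j) ` A \<subseteq> U" unfolding U_def by blast
    ultimately have "finite ((\<lambda>j. 2 * j) ` A)" by (rule finite_subset[rotated])
    thus "finite A" using finite_image_iff[OF i1] by blast
  next
    assume "finite A"
    thus "finite U" unfolding U_def by blast
  qed
  have ne: "2 * a \<noteq> 2 * b + (1::nat)" for a b by presburger
  have dj: "(\<lambda>j. 2 * j) ` A \<inter> (\<lambda>j. 2 * j + 1) ` A = {}" using ne by blast
  have card: "card U = 2 * card A" if fA: "finite A"
  proof -
    have "card U = card ((\<lambda>j. 2 * j) ` A) + card ((\<lambda>j. 2 * j + 1) ` A)"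
      unfolding U_def by (rule card_Un_disjoint[OF _ _ dj]) (use fA in blast)+
    also have "\<dots> = card A + card A" using card_image[OF i1] card_image[OF i2] by simp
    finally show ?thesis by simp
  qed
  have "(finite U \<and> card U \<le> k) \<longleftrightarrow> (finite A \<and> card A \<le> k div 2)"
  proof (cases "finite A")
    case True
    have "2 * card A \<le> k \<longleftrightarrow> card A \<le> k div 2" by linarith
    thus ?thesis using True fin card[OF True] by simp
  next
    case False thus ?thesis using fin by simp
  qed
  thus "(finite {j. s < \<bar>sigma 2 y j\<bar>} \<and> card {j. s < \<bar>sigma 2 y j\<bar>} \<le> k) \<longleftrightarrow>
        (finite {j. s < \<bar>y j\<bar>} \<and> card {j. s < \<bar>y j\<bar>} \<le> k div 2)"
    unfolding UU A_def[symmetric] .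
qed

lemma sum_div2:
  fixes f :: "nat \<Rightarrow> real"
  shows "(\<Sum>i<m. f (i div 2)) = 2 * (\<Sum>i<m div 2. f i) + (if odd m then f (m div 2) else (0::real))"
proof (induction m)
  case 0 then show ?case by simp
next
  case (Suc m)
  show ?case
  proof (cases "even m")
    case True
    then show ?thesis using Suc by (simp add: lessThan_Suc)
  next
    case False
    then obtain q where q: "m = 2 * q + 1" by (auto elim: oddE)
    have "Suc m div 2 = Suc q" "m div 2 = q" using q by auto
    then show ?thesis using Suc q by (simp add: lessThan_Suc)
  qed
qed

lemma avg_gen:
  fixes y :: "nat \<Rightarrow> real"
  shows "avg_seq \<psi> y n = (\<Sum>i<Suc n. decr y i) / \<psi> (real (Suc n))"
  unfolding avg_seq_def by (simp add: lessThan_Suc_atMost)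

lemma Bseq_lin: "Bseq (f::nat\<Rightarrow>real) \<Longrightarrow> Bseq g \<Longrightarrow> Bseq (\<lambda>k. a * f k + b * g k)"
proof -
  assume "Bseq f" "Bseq g"
  then obtain A B where A: "\<And>n. norm (f n) \<le> A" and B: "\<And>n. norm (g n) \<le> B"
    unfolding Bseq_def by blast
  have "\<bar>a * f n + b * g n\<bar> \<le> \<bar>a\<bar> * A + \<bar>b\<bar> * B" for n
  proof -
    have "\<bar>a * f n + b * g n\<bar> \<le> \<bar>a\<bar> * \<bar>f n\<bar> + \<bar>b\<bar> * \<bar>g n\<bar>"
      by (metis abs_mult abs_triangle_ineq)
    also have "\<dots> \<le> \<bar>a\<bar> * A + \<bar>b\<bar> * B"
      using A[of n] B[of n] by (intro add_mono mult_left_mono) auto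
    finally show ?thesis .
  qed
  thus ?thesis by (intro BseqI'[of _ "\<bar>a\<bar> * A + \<bar>b\<bar> * B"]) simp
qed

locale main_loc = m_loc + om_loc +
  assumes dix: "is_dixmier_trace \<psi> \<omega>"
begin

lemma avg_nonneg: "0 \<le> avg_seq \<psi> x n"
  using avg_S[of n] S_nonneg[of "Suc n"] pos[of "real (Suc n)"] by simp

lemma avg_B: "Bseq (avg_seq \<psi> x)"
  by (rule BseqI'[of _ Cb]) (use avg_le avg_nonneg in simp)

definition ea where "ea = (\<lambda>j. if even j then x (j div 2) else 0)"
definition oa where "oa = (\<lambda>j. if odd j then x (j div 2) else 0)"

lemma ea_avg: "avg_seq \<psi> ea = avg_seq \<psi> x"
  unfolding avg_seq_def ea_def decr_ev ..
lemma oa_avg: "avg_seq \<psi> oa = avg_seq \<psi> x"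
  unfolding avg_seq_def oa_def decr_od ..

lemma ea_m: "ea \<in> m_psi \<psi>" and oa_m: "oa \<in> m_psi \<psi>"
proof -
  obtain B where B: "\<And>j. norm (x j) \<le> B" using xB unfolding Bseq_def by blast
  have B0: "0 \<le> B" using B[of 0] xpos[of 0] by simp
  have "Bseq ea" by (rule BseqI'[of _ B]) (use B B0 in \<open>auto simp: ea_def\<close>)
  moreover have "Bseq oa" by (rule BseqI'[of _ B]) (use B B0 in \<open>auto simp: oa_def\<close>)
  ultimately show "ea \<in> m_psi \<psi>" "oa \<in> m_psi \<psi>"
    unfolding m_psi_def using ea_avg oa_avg avgb by auto
qed

lemma sum_eo: "(\<lambda>k. ea k + oa k) = sigma 2 x"
  unfolding ea_def oa_def sigma_def by auto

lemma tau_sig: "\<omega> (avg_seq \<psi> (sigma 2 x)) = 2 * \<omega> (avg_seq \<psi> x)"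
proof -
  have "tau \<psi> \<omega> (\<lambda>k. ea k + oa k) = tau \<psi> \<omega> ea + tau \<psi> \<omega> oa"
    using dix ea_m oa_m xpos unfolding is_dixmier_trace_def ea_def oa_def by auto
  thus ?thesis unfolding sum_eo tau_def ea_avg oa_avg by simp
qed

lemma G2_zero: "\<omega> (\<lambda>n. G 2 (Suc n)) = 0"
proof -
  define e where "e n = (if odd (Suc n) then decr x (Suc n div 2) else 0) / \<psi> (real (Suc n))" for n
  have eq: "avg_seq \<psi> (sigma 2 x) n = 2 * avg_seq \<psi> x n + (-2) * G 2 (Suc n) + e n" for n
  proof -
    have "avg_seq \<psi> (sigma 2 x) n = (\<Sum>i<Suc n. decr x (i div 2)) / \<psi> (real (Suc n))"
      unfolding avg_gen decr_sig ..
    also have "\<dots> = (2 * S (Suc n div 2) + (if odd (Suc n) then decr x (Suc n div 2) else 0)) / \<psi> (real (Suc n))"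
      unfolding sum_div2[of "decr x" "Suc n"] S_def ..
    also have "\<dots> = 2 * avg_seq \<psi> x n + (-2) * G 2 (Suc n) + e n"
      unfolding avg_S G_def e_def using pos[of "real (Suc n)"] by (simp add: field_simps)
    finally show ?thesis .
  qed
  have el: "e \<longlonglongrightarrow> 0"
  proof (rule Lim_null_comparison)
    have "(\<lambda>n. decr x (Suc n div 2)) \<longlonglongrightarrow> 0"
    proof -
      have fl: "filterlim (\<lambda>n. n div 2) at_top sequentially" by (rule div_tends0) simp
      have "(\<lambda>n. decr x (n div 2)) \<longlonglongrightarrow> 0" using filterlim_compose[OF decr_lim fl] by simp
      thus ?thesis using LIMSEQ_Suc by blast
    qed
    thus "(\<lambda>n. decr x (Suc n div 2) / \<psi> 1) \<longlonglongrightarrow> 0" by (intro tendsto_divide_zero)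
    show "eventually (\<lambda>n. norm (e n) \<le> decr x (Suc n div 2) / \<psi> 1) sequentially"
    proof (intro always_eventually allI)
      fix n
      have p: "\<psi> 1 > 0" "\<psi> 1 \<le> \<psi> (real (Suc n))" using pos[of 1] psi_mono[of 1 "real (Suc n)"] by auto
      have "\<bar>e n\<bar> \<le> decr x (Suc n div 2) / \<psi> (real (Suc n))"
        unfolding e_def using decr_nonneg p by auto
      also have "\<dots> \<le> decr x (Suc n div 2) / \<psi> 1"
        using p decr_nonneg by (intro divide_left_mono) auto
      finally show "norm (e n) \<le> decr x (Suc n div 2) / \<psi> 1" by simp
    qed
  qed
  have eB: "Bseq e" using el by (rule null_Bseq)
  have GB: "Bseq (\<lambda>n. G 2 (Suc n))" by (rule bnd_Bseq[OF G_bnd])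
  have B1: "Bseq (\<lambda>n. 2 * avg_seq \<psi> x n + (-2) * G 2 (Suc n))" by (rule Bseq_lin[OF avg_B GB])
  have "\<omega> (avg_seq \<psi> (sigma 2 x)) = \<omega> (\<lambda>n. 1 * (2 * avg_seq \<psi> x n + (-2) * G 2 (Suc n)) + 1 * e n)"
    using eq by (intro arg_cong[where f=\<omega>]) auto
  also have "\<dots> = 1 * \<omega> (\<lambda>n. 2 * avg_seq \<psi> x n + (-2) * G 2 (Suc n)) + 1 * \<omega> e"
    by (rule lin[OF B1 eB])
  also have "\<omega> (\<lambda>n. 2 * avg_seq \<psi> x n + (-2) * G 2 (Suc n)) = 2 * \<omega> (avg_seq \<psi> x) + (-2) * \<omega> (\<lambda>n. G 2 (Suc n))"
    by (rule lin[OF avg_B GB])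
  also have "\<omega> e = 0" by (rule om_null[OF el])
  finally show ?thesis using tau_sig by simp
qed


lemma Gpow_zero: "\<omega> (\<lambda>n. G (2 ^ q) (Suc n)) = 0"
proof (induction q)
  case 0
  have "(\<lambda>n. G (2 ^ 0) (Suc n)) = (\<lambda>_. 0)" by (simp add: G_def)
  thus ?case using om_const[of 0] by simp
next
  case (Suc q)
  define K :: nat where "K = 2 ^ q"
  have K1: "K \<ge> 1" unfolding K_def by simp
  have le: "G (2 * K) m \<le> G K m + G 2 (m div K)" for m
  proof (cases "m = 0")
    case True then show ?thesis by (simp add: G_def)
  next
    case False
    have pm: "\<psi> (real m) > 0" using False pos by simp
    have dv: "m div (2 * K) = m div K div 2" by (simp add: div_mult2_eq mult.commute)
    have "G (2 * K) m = G K m + (S (m div K) - S (m div K div 2)) / \<psi> (real m)"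
      unfolding G_def dv by (simp add: diff_divide_distrib)
    also have "(S (m div K) - S (m div K div 2)) / \<psi> (real m) \<le> G 2 (m div K)"
    proof (cases "m div K = 0")
      case True then show ?thesis by (simp add: G_def)
    next
      case False
      have p2: "\<psi> (real (m div K)) > 0" using False pos by simp
      have p3: "\<psi> (real (m div K)) \<le> \<psi> (real m)" by (rule psi_mono) auto
      have n0: "0 \<le> S (m div K) - S (m div K div 2)" using S_mono[of "m div K div 2" "m div K"] by simp
      show ?thesis unfolding G_def using p2 p3 n0 by (intro divide_left_mono) auto
    qed
    finally show ?thesis by simp
  qed
  have B1: "Bseq (\<lambda>n. G (2 * K) (Suc n))" by (rule bnd_Bseq[OF G_bnd])
  have B2: "Bseq (\<lambda>n. G K (Suc n))" by (rule bnd_Bseq[OF G_bnd])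
  have B3: "Bseq (\<lambda>n. G 2 ((n + 1) div K))" by (rule bnd_Bseq[OF G_bnd])
  have "\<omega> (\<lambda>n. G (2 * K) (Suc n)) \<le> \<omega> (\<lambda>n. 1 * G K (Suc n) + 1 * G 2 ((n + 1) div K))"
    by (rule om_mono_ev[OF B1 Bseq_lin[OF B2 B3]]) (use le in auto)
  also have "\<dots> = 1 * \<omega> (\<lambda>n. G K (Suc n)) + 1 * \<omega> (\<lambda>n. G 2 ((n + 1) div K))"
    by (rule lin[OF B2 B3])
  also have "\<omega> (\<lambda>n. G 2 ((n + 1) div K)) = \<omega> (\<lambda>n. G 2 (n + 1))"
    by (rule om_down[OF G_bnd G_slow K1]) simp
  also have "\<dots> = 0" using G2_zero by simp
  finally have "\<omega> (\<lambda>n. G (2 * K) (Suc n)) \<le> 0" using Suc unfolding K_def by simp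
  moreover have "0 \<le> \<omega> (\<lambda>n. G (2 * K) (Suc n))" by (rule om_pos[OF B1 G_nonneg])
  ultimately show ?case unfolding K_def by simp
qed

lemma Gup_zero: "\<omega> (\<lambda>n. G (2 ^ p) (2 ^ p * (n + 1))) = 0"
proof -
  have "\<omega> (\<lambda>n. G (2 ^ p) (2 ^ p * (n + 1))) = \<omega> (\<lambda>n. G (2 ^ p) (n + 1))"
    by (rule om_up[OF G_bnd G_slow]) simp_all
  thus ?thesis using Gpow_zero[of p] by simp
qed

definition R :: "nat \<Rightarrow> real" where
  "R n = (1 / \<psi> (real (Suc n))) * (\<Sum>k\<in>{k. \<psi> (real (Suc n)) / real (Suc n) \<le> x k}. x k)"

lemma main_eq:
  assumes lim: "Limsup at_top (\<lambda>t. ereal (\<psi> (2 * t) / \<psi> t)) < 2"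
  shows "\<omega> (avg_seq \<psi> x) = \<omega> R"
proof -
  obtain p N0 where sb: "\<And>N. N \<ge> N0 \<Longrightarrow> card {j. \<psi> (real N) / real N \<le> x j} \<le> 2 ^ p * N"
    using s_bound[OF lim] by blast
  define K :: nat where "K = 2 ^ p"
  have K1: "K \<ge> 1" unfolding K_def by simp
  have RS: "R n = S (card {k. \<psi> (real (Suc n)) / real (Suc n) \<le> x k}) / \<psi> (real (Suc n))" for n
  proof -
    have "\<psi> (real (Suc n)) / real (Suc n) > 0" using pos[of "real (Suc n)"] by simp
    thus ?thesis unfolding R_def using R2 by simp
  qed
  have key: "\<bar>avg_seq \<psi> x n - R n\<bar> \<le> 1 / real L + G L (Suc n) + real K * G K (K * Suc n)"
    if nN: "Suc n \<ge> N0" and L1: "L \<ge> 1" for n L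
  proof -
    define N where "N = Suc n"
    define u where "u = \<psi> (real N) / real N"
    define s where "s = card {k. u \<le> x k}"
    have pN: "\<psi> (real N) > 0" unfolding N_def using pos by simp
    have u0: "u > 0" unfolding u_def N_def using pN N_def by simp
    have sKN: "s \<le> K * N" unfolding s_def u_def K_def N_def by (rule sb[OF nN])
    have A: "avg_seq \<psi> x n = S N / \<psi> (real N)" unfolding N_def by (rule avg_S)
    have Rn: "R n = S s / \<psi> (real N)" unfolding RS s_def u_def N_def ..
    have Gn: "0 \<le> G L N" "0 \<le> G K (K * N)" by (rule G_nonneg)+
    show ?thesis
    proof (cases "s \<le> N")
      case True
      define j where "j = max s (N div L)"
      have jN: "j \<le> N" unfolding j_def using True by simp
      have sj: "s \<le> j" unfolding j_def by simp
      have "S N - S j \<le> S N - S (N div L)" using S_mono[of "N div L" j] unfolding j_def by simp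
      moreover have "S j - S s \<le> real (N div L) * u"
      proof -
        have "S j - S s = (\<Sum>i\<in>{s..<j}. decr x i)" using S_split[OF sj] by simp
        also have "\<dots> \<le> (\<Sum>i\<in>{s..<j}. u)"
          by (rule sum_mono, rule decr_small[OF u0]) (auto simp: s_def)
        also have "\<dots> = real (j - s) * u" by simp
        also have "\<dots> \<le> real (N div L) * u"
        proof -
          have "j - s \<le> N div L" unfolding j_def by simp
          thus ?thesis using u0 by (intro mult_right_mono) auto
        qed
        finally show ?thesis .
      qed
      moreover have "real (N div L) * u \<le> \<psi> (real N) / real L"
      proof -
        have "real (N div L) \<le> real N / real L" by (rule of_nat_div_le_of_nat)
        hence "real (N div L) * u \<le> real N / real L * u" using u0 by (intro mult_right_mono) auto
        also have "\<dots> = \<psi> (real N) / real L" unfolding u_def N_def by simp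
        finally show ?thesis .
      qed
      ultimately have d: "S N - S s \<le> (S N - S (N div L)) + \<psi> (real N) / real L" by linarith
      have d0: "0 \<le> S N - S s" using S_mono[OF True] by simp
      have "avg_seq \<psi> x n - R n = (S N - S s) / \<psi> (real N)" unfolding A Rn by (simp add: diff_divide_distrib)
      also have "\<dots> \<le> ((S N - S (N div L)) + \<psi> (real N) / real L) / \<psi> (real N)"
        using d pN by (intro divide_right_mono) auto
      also have "\<dots> = G L N + 1 / real L" unfolding G_def using pN by (simp add: add_divide_distrib)
      finally have up: "avg_seq \<psi> x n - R n \<le> G L N + 1 / real L" .
      have lo: "0 \<le> avg_seq \<psi> x n - R n" unfolding A Rn using d0 pN by (simp add: diff_divide_distrib[symmetric])
      have "0 \<le> real K * G K (K * N)" using Gn K1 by simp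
      thus ?thesis using up lo unfolding N_def by simp
    next
      case False
      have d0: "0 \<le> S s - S N" using S_mono[of N s] False by simp
      have "S s - S N \<le> S (K * N) - S N" using S_mono[OF sKN] by simp
      also have "\<dots> = G K (K * N) * \<psi> (real (K * N))"
      proof -
        have "K * N > 0" using K1 N_def by simp
        hence "\<psi> (real (K * N)) > 0" using pos[of "real (K * N)"] by simp
        moreover have "K * N div K = N" using K1 by simp
        ultimately show ?thesis unfolding G_def by simp
      qed
      also have "\<dots> \<le> G K (K * N) * (real K * \<psi> (real N))"
      proof -
        have "\<psi> (real K * real N) \<le> real K * \<psi> (real N)" using scale[of "real N" "real K"] K1 N_def by simp
        thus ?thesis using Gn by (intro mult_left_mono) auto
      qed
      finally have d: "S s - S N \<le> real K * G K (K * N) * \<psi> (real N)" by (simp add: algebra_simps)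
      have "R n - avg_seq \<psi> x n = (S s - S N) / \<psi> (real N)" unfolding A Rn by (simp add: diff_divide_distrib)
      also have "\<dots> \<le> real K * G K (K * N)" using d pN by (simp add: divide_le_eq)
      finally have up: "R n - avg_seq \<psi> x n \<le> real K * G K (K * N)" .
      have lo: "0 \<le> R n - avg_seq \<psi> x n" unfolding A Rn using d0 pN by (simp add: diff_divide_distrib[symmetric])
      have "0 \<le> 1 / real L + G L N" using Gn L1 by simp
      thus ?thesis using up lo unfolding N_def by simp
    qed
  qed
  have RB: "Bseq R"
  proof (rule Bseq_eventually_mono)
    show "Bseq (\<lambda>_. 1 + Cb + real K * Cb)" by (rule Bseq_const1)
    show "eventually (\<lambda>n. norm (R n) \<le> norm (1 + Cb + real K * Cb)) sequentially"
      unfolding eventually_sequentially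
    proof (intro exI allI impI)
      fix n assume "n \<ge> N0"
      hence k: "\<bar>avg_seq \<psi> x n - R n\<bar> \<le> 1 / real (1::nat) + G 1 (Suc n) + real K * G K (K * Suc n)"
        by (intro key) auto
      have "G K (K * Suc n) \<le> Cb" "G 1 (Suc n) \<le> Cb" by (rule G_le)+
      hence "real K * G K (K * Suc n) \<le> real K * Cb" by (intro mult_left_mono) auto
      moreover have "G 1 (Suc n) = 0" by (simp add: G_def)
      moreover have "0 \<le> R n" unfolding R_def using pos[of "real (Suc n)"] xpos by (simp add: sum_nonneg)
      ultimately show "norm (R n) \<le> norm (1 + Cb + real K * Cb)"
        using k avg_le[of n] avg_nonneg[of n] Cb_nonneg by simp
    qed
  qed
  have bnd_q: "\<bar>\<omega> (avg_seq \<psi> x) - \<omega> R\<bar> \<le> 1 / 2 ^ q" for q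
  proof -
    define L :: nat where "L = 2 ^ q"
    have L1: "L \<ge> 1" unfolding L_def by simp
    define W where "W n = 1 / real L + G L (Suc n) + real K * G K (K * Suc n)" for n
    define W1 where "W1 n = 1 * (1 / real L) + 1 * G L (Suc n)" for n
    have BG1: "Bseq (\<lambda>n. G L (Suc n))" by (rule bnd_Bseq[OF G_bnd])
    have BG2: "Bseq (\<lambda>n. G K (K * Suc n))" by (rule bnd_Bseq[OF G_bnd])
    have BW1: "Bseq W1" unfolding W1_def by (rule Bseq_lin[OF Bseq_const1 BG1])
    have Weq: "W = (\<lambda>n. 1 * W1 n + real K * G K (K * Suc n))" unfolding W_def W1_def by auto
    have WB: "Bseq W" unfolding Weq by (rule Bseq_lin[OF BW1 BG2])
    have omW: "\<omega> W = 1 / real L"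
    proof -
      have a: "\<omega> W = 1 * \<omega> W1 + real K * \<omega> (\<lambda>n. G K (K * Suc n))"
        unfolding Weq by (rule lin[OF BW1 BG2])
      have b: "\<omega> W1 = 1 * \<omega> (\<lambda>_. 1 / real L) + 1 * \<omega> (\<lambda>n. G L (Suc n))"
        unfolding W1_def by (rule lin[OF Bseq_const1 BG1])
      have c: "\<omega> (\<lambda>n. G L (Suc n)) = 0" unfolding L_def by (rule Gpow_zero)
      have d: "\<omega> (\<lambda>n. G K (K * Suc n)) = 0" using Gup_zero[of p] unfolding K_def by simp
      show ?thesis using a b c d om_const by simp
    qed
    have ev: "eventually (\<lambda>n. \<bar>avg_seq \<psi> x n - R n\<bar> \<le> W n) sequentially"
      unfolding eventually_sequentially W_def using key L1 by (intro exI[of _ N0]) auto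
    have DB: "Bseq (\<lambda>n. avg_seq \<psi> x n - R n)" by (rule Bseq_diff1[OF RB avg_B])
    have DB': "Bseq (\<lambda>n. R n - avg_seq \<psi> x n)" by (rule Bseq_diff1[OF avg_B RB])
    have "\<omega> (avg_seq \<psi> x) - \<omega> R = \<omega> (\<lambda>n. avg_seq \<psi> x n - R n)"
      by (rule om_diff[OF avg_B RB, symmetric])
    also have "\<dots> \<le> \<omega> W" by (rule om_mono_ev[OF DB WB]) (use ev in \<open>auto elim: eventually_mono\<close>)
    finally have 1: "\<omega> (avg_seq \<psi> x) - \<omega> R \<le> 1 / real L" using omW by simp
    have "\<omega> R - \<omega> (avg_seq \<psi> x) = \<omega> (\<lambda>n. R n - avg_seq \<psi> x n)"
      by (rule om_diff[OF RB avg_B, symmetric])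
    also have "\<dots> \<le> \<omega> W" by (rule om_mono_ev[OF DB' WB]) (use ev in \<open>auto elim: eventually_mono\<close>)
    finally have 2: "\<omega> R - \<omega> (avg_seq \<psi> x) \<le> 1 / real L" using omW by simp
    show ?thesis using 1 2 unfolding L_def by simp
  qed
  show ?thesis
  proof (rule ccontr)
    assume ne: "\<omega> (avg_seq \<psi> x) \<noteq> \<omega> R"
    define d where "d = \<bar>\<omega> (avg_seq \<psi> x) - \<omega> R\<bar>"
    have d0: "d > 0" using ne unfolding d_def by simp
    have "(\<lambda>q. (1/2::real) ^ q) \<longlonglongrightarrow> 0" by (intro LIMSEQ_power_zero) auto
    then obtain q where "(1/2::real) ^ q < d"
      using d0 by (metis (no_types, lifting) eventually_sequentially order_tendstoD(2) order_refl)
    moreover have "d \<le> 1 / 2 ^ q" unfolding d_def by (rule bnd_q)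
    ultimately show False by (simp add: power_one_over)
  qed
qed

end

theorem theorem3p7:
  fixes \<psi> :: "real \<Rightarrow> real" and \<omega> :: "(nat \<Rightarrow> real) \<Rightarrow> real" and x :: "nat \<Rightarrow> real"
  assumes "Psi_class \<psi>"
    and "Limsup at_top (\<lambda>t. ereal (\<psi> (2 * t) / \<psi> t)) < 2"
    and "dil_inv_gen_limit \<omega>"
    and "is_dixmier_trace \<psi> \<omega>"
    and "x \<in> m_psi \<psi>"
    and "\<forall>k. 0 \<le> x k"
  shows "tau \<psi> \<omega> x =
    \<omega> (\<lambda>n. (1 / \<psi> (real (Suc n))) *
         (\<Sum>k\<in>{k. \<psi> (real (Suc n)) / real (Suc n) \<le> x k}. x k))"
proof -
  interpret main_loc \<psi> x \<omega>
    by unfold_locales (use assms in \<open>auto simp: psi_loc_def m_loc_axioms_def om_loc_def\<close>)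
  have "R = (\<lambda>n. (1 / \<psi> (real (Suc n))) *
         (\<Sum>k\<in>{k. \<psi> (real (Suc n)) / real (Suc n) \<le> x k}. x k))"
    by (rule ext) (simp add: R_def)
  then show ?thesis unfolding tau_def using main_eq[OF assms(2)] by simp
qed

end
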